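(* Let $g:\mathbb{R}^n\to\mathbb{R}^m$ be continuously differentiable, $K\subseteq\mathbb{R}^m$ closed, $\bar x\in C:=g^{-1}(K)$, $d\in\mathbb{R}^n$, and assume MSCQ holds at $\bar x$ in direction $d$ for the system $g(x)\in K$ with modulus $\kappa$. Then $$N_{g^{-1}(K)}(\bar x;d)\subseteq\{v\in\mathbb{R}^n\mid \exists\lambda\in N_K(g(\bar x);\nabla g(\bar x)d)\cap\kappa\|v\|B_{\mathbb{R}^m}\text{ with } v=\nabla g(\bar x)^T\lambda\}.$$
   Context: $B_{\mathbb{R}^m}$ is the closed unit ball. The directional limiting normal cone of a closed set $S$ at $\bar x$ in direction $d$ is $N_S(\bar x;d):=\limsup_{t\downarrow0,\,d'\to d}\hat N_S(\bar x+td')$, where $\hat N_S$ is the Fréchet normal cone (empty outside $S$). Directional neighborhood: for $\rho,\delta>0$, $V_{\rho,\delta}(d):=\{w\in\delta B_{\mathbb{R}^n}\mid \|\,\|d\|w-\|w\|d\,\|\le\rho\|w\|\|d\|\}$. MSCQ at $\bar x$ in direction $d$ for $g(x)\in K$ means there are $\rho,\delta,\kappa>0$ with $\mathrm{dist}(x,g^{-1}(K))\le\kappa\,\mathrm{dist}(g(x),K)$ for all $x\in\bar x+V_{\rho,\delta}(d)$; the modulus is the infimum of such $\kappa$ over all admissible triples $(\rho,\delta,\kappa)$. *)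

theory Defs
  imports "HOL-Analysis.Analysis"
begin

definition frechet_normal :: "('a::euclidean_space) set \<Rightarrow> 'a \<Rightarrow> 'a set" where
  "frechet_normal S x = (if x \<in> S then
     {v. \<forall>e>0. \<exists>r>0. \<forall>y\<in>S. norm (y - x) < r \<longrightarrow> inner v (y - x) \<le> e * norm (y - x)}
   else {})"

definition dir_normal :: "('a::euclidean_space) set \<Rightarrow> 'a \<Rightarrow> 'a \<Rightarrow> 'a set" where
  "dir_normal S x d = {v. \<exists>t dd vv. (\<forall>k. t k > 0) \<and> t \<longlonglongrightarrow> 0 \<and> dd \<longlonglongrightarrow> d \<and> vv \<longlonglongrightarrow> v
      \<and> (\<forall>k. vv k \<in> frechet_normal S (x + t k *\<^sub>R dd k))}"

definition dir_nbhd :: "real \<Rightarrow> real \<Rightarrow> ('a::euclidean_space) \<Rightarrow> 'a set" where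
  "dir_nbhd \<rho> \<delta> d = {w. norm w \<le> \<delta> \<and>
      norm (norm d *\<^sub>R w - norm w *\<^sub>R d) \<le> \<rho> * norm w * norm d}"

definition mscq_triple :: "('a::euclidean_space \<Rightarrow> 'b::euclidean_space) \<Rightarrow> 'b set \<Rightarrow> 'a \<Rightarrow> 'a
    \<Rightarrow> real \<Rightarrow> real \<Rightarrow> real \<Rightarrow> bool" where
  "mscq_triple g K xbar d \<rho> \<delta> \<kappa> \<longleftrightarrow> \<rho> > 0 \<and> \<delta> > 0 \<and> \<kappa> > 0 \<and>
     (\<forall>x \<in> (\<lambda>w. xbar + w) ` dir_nbhd \<rho> \<delta> d. infdist x (g -` K) \<le> \<kappa> * infdist (g x) K)"

definition mscq_dir :: "('a::euclidean_space \<Rightarrow> 'b::euclidean_space) \<Rightarrow> 'b set \<Rightarrow> 'a \<Rightarrow> 'a \<Rightarrow> bool" where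
  "mscq_dir g K xbar d \<longleftrightarrow> (\<exists>\<rho> \<delta> \<kappa>. mscq_triple g K xbar d \<rho> \<delta> \<kappa>)"

definition mscq_modulus :: "('a::euclidean_space \<Rightarrow> 'b::euclidean_space) \<Rightarrow> 'b set \<Rightarrow> 'a \<Rightarrow> 'a \<Rightarrow> real" where
  "mscq_modulus g K xbar d = Inf {\<kappa>. \<exists>\<rho> \<delta>. mscq_triple g K xbar d \<rho> \<delta> \<kappa>}"

end

theory Submission imports Defs begin

lemma transpose_inner: "inner (transpose A *v (x::real^'m)) (h::real^'n) = inner x (A *v h)"
  by (simp add: dot_lmul_matrix)

lemma nearest_frechet:
  fixes z p :: "'a::euclidean_space"
  assumes zK: "z \<in> K" and near: "\<And>y. y \<in> K \<Longrightarrow> dist p z \<le> dist p y" and a: "a \<ge> 0"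
  shows "a *\<^sub>R (p - z) \<in> frechet_normal K z"
proof -
  have key: "a * inner (p - z) (y - z) \<le> (a/2) * norm (y - z) ^ 2" if "y \<in> K" for y
  proof -
    have "norm (p - z) ^ 2 \<le> norm (p - y) ^ 2"
      using near[OF that] by (simp add: dist_norm power_mono)
    also have "p - y = (p - z) - (y - z)" by simp
    finally have "norm (p - z) ^ 2 \<le> norm ((p - z) - (y - z)) ^ 2" .
    then have "2 * inner (p - z) (y - z) \<le> norm (y - z) ^ 2"
      by (simp add: power2_norm_eq_inner inner_diff_left inner_diff_right inner_commute algebra_simps)
    then have "a * (2 * inner (p - z) (y - z)) \<le> a * norm (y - z) ^ 2" by (rule mult_left_mono[OF _ a])
    then show ?thesis by simp
  qed
  show ?thesis unfolding frechet_normal_def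
  proof (simp add: zK, intro allI impI)
    fix e :: real assume e: "e > 0"
    show "\<exists>r>0. \<forall>y\<in>K. norm (y - z) < r \<longrightarrow> a * inner (p - z) (y - z) \<le> e * norm (y - z)"
    proof (intro exI[of _ "2*e/(a+1)"] conjI ballI impI)
      show "0 < 2*e/(a+1)" using e a by simp
      fix y assume y: "y \<in> K" and ny: "norm (y - z) < 2*e/(a+1)"
      have "(a/2) * norm (y - z) \<le> e"
      proof -
        have "(a/2) * norm (y - z) \<le> ((a+1)/2) * norm (y - z)" by (simp add: mult_right_mono)
        also have "\<dots> \<le> ((a+1)/2) * (2*e/(a+1))" using ny a by (intro mult_left_mono) auto
        also have "\<dots> = e" using a by simp
        finally show ?thesis .
      qed
      note h = this
      have "(a/2) * norm (y - z) ^ 2 \<le> e * norm (y - z)"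
        using mult_right_mono[OF h norm_ge_zero[of "y - z"]] by (simp add: power2_eq_square mult.assoc)
      with key[OF y] show "a * inner (p - z) (y - z) \<le> e * norm (y - z)" by linarith
    qed
  qed
qed


lemma core:
  fixes g :: "real^'n \<Rightarrow> real^'m" and J :: "real^'n \<Rightarrow> real^'n^'m"
  assumes deriv: "\<And>x. (g has_derivative (\<lambda>h. J x *v h)) (at x)"
    and closedK: "closed K" and gx: "g x \<in> K" and s: "s > 0" and eps: "\<epsilon> > 0" and L: "L > 0"
    and H: "\<forall>y\<in>cball x s. inner v (y - x) \<le> \<epsilon> * norm (y - x) + L * infdist (g y) K"
  shows "\<exists>y z lam. y \<in> ball x s \<and> z \<in> K \<and> dist (g y) z \<le> dist (g y) (g x) \<and> lam \<in> frechet_normal K z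
     \<and> norm lam \<le> L \<and> norm (v - transpose (J y) *v lam) \<le> 4*\<epsilon>"
proof -
  define c where "c = 2*\<epsilon>/s"
  define d0 where "d0 = (\<epsilon> * s) / (2 * L)"
  have c: "c > 0" and d0: "d0 > 0" using s eps L by (auto simp: c_def d0_def)
  define G where "G y = - inner v (y - x) + c * norm (y - x)^2 + L * sqrt ((infdist (g y) K)^2 + d0^2)" for y
  have contg: "continuous_on UNIV g"
    by (rule continuous_at_imp_continuous_on) (use has_derivative_continuous[OF deriv] in auto)
  have contG: "continuous_on (cball x s) G"
    unfolding G_def
    by (intro continuous_intros continuous_on_subset[OF contg]) auto
  obtain ys where ys: "ys \<in> cball x s" and ysmin: "\<And>y. y \<in> cball x s \<Longrightarrow> G ys \<le> G y"
    using continuous_attains_inf[OF compact_cball _ contG] s by fastforce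
  have Kne: "K \<noteq> {}" using gx by auto
  obtain zs where zs: "zs \<in> K" and zsmin: "\<And>y. y \<in> K \<Longrightarrow> dist (g ys) zs \<le> dist (g ys) y"
    using distance_attains_inf[OF closedK Kne] by metis
  have infd: "infdist (g ys) K = dist (g ys) zs"
  proof (rule antisym)
    show "infdist (g ys) K \<le> dist (g ys) zs" by (rule infdist_le[OF zs])
    show "dist (g ys) zs \<le> infdist (g ys) K"
      unfolding infdist_notempty[OF Kne] by (rule cINF_greatest[OF Kne zsmin])
  qed
  have Gx: "G x = L * d0" using d0 gx by (simp add: G_def)
  have ysball: "ys \<in> ball x s"
  proof (rule ccontr)
    assume "ys \<notin> ball x s"
    with ys have n: "norm (ys - x) = s" by (simp add: dist_norm norm_minus_commute)
    let ?d = "infdist (g ys) K"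
    have "inner v (ys - x) \<le> \<epsilon> * s + L * ?d" using H ys n by auto
    moreover have "?d \<le> sqrt (?d^2 + d0^2)"
      using real_sqrt_le_mono[of "?d^2" "?d^2 + d0^2"] infdist_nonneg[of "g ys" K] by simp
    then have "L * ?d \<le> L * sqrt (?d^2 + d0^2)" using L by (intro mult_left_mono) auto
    moreover have "c * norm (ys - x)^2 = 2 * \<epsilon> * s" using n s by (simp add: c_def power2_eq_square)
    ultimately have "G ys \<ge> \<epsilon> * s"
      unfolding G_def by linarith
    moreover have "G ys \<le> G x" using ysmin s by simp
    moreover have "L * d0 < \<epsilon> * s" using L eps s by (simp add: d0_def)
    ultimately show False using Gx by linarith
  qed
  define Hf where "Hf y = - inner v (y - x) + c * inner (y - x) (y - x) + L * sqrt (inner (g y - zs) (g y - zs) + d0^2)" for y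
  have HG: "G y \<le> Hf y" if "y \<in> cball x s" for y
  proof -
    have "infdist (g y) K \<le> dist (g y) zs" by (rule infdist_le[OF zs])
    then have "(infdist (g y) K)^2 \<le> inner (g y - zs) (g y - zs)"
      using infdist_nonneg[of "g y" K] by (simp add: dist_norm power_mono power2_norm_eq_inner[symmetric])
    then have "sqrt ((infdist (g y) K)^2 + d0^2) \<le> sqrt (inner (g y - zs) (g y - zs) + d0^2)" by simp
    then show ?thesis unfolding G_def Hf_def using L by (simp add: power2_norm_eq_inner)
  qed
  have HGs: "Hf ys = G ys" unfolding G_def Hf_def infd by (simp add: power2_norm_eq_inner dist_norm)
  have Hmin: "\<forall>y\<in>ball x s. Hf ys \<le> Hf y"
    using HG ysmin HGs by (metis ball_subset_cball order_trans subsetD)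
  define Q where "Q = inner (g ys - zs) (g ys - zs) + d0^2"
  have Q: "Q > 0" unfolding Q_def using d0 by (simp add: add_nonneg_pos)
  define lam where "lam = (L / sqrt Q) *\<^sub>R (g ys - zs)"
  have dH: "(Hf has_derivative (\<lambda>h. - inner v h + c * (inner (ys - x) h + inner h (ys - x))
        + L * ((inner (g ys - zs) (J ys *v h) + inner (J ys *v h) (g ys - zs)) * (inverse (sqrt Q) / 2)))) (at ys)"
    unfolding Hf_def
  proof (intro derivative_intros)
    show "((\<lambda>y. sqrt (inner (g y - zs) (g y - zs) + d0^2)) has_derivative
      (\<lambda>h. (inner (g ys - zs) (J ys *v h) + inner (J ys *v h) (g ys - zs)) * (inverse (sqrt Q) / 2))) (at ys)"
    proof (rule DERIV_compose_FDERIV[where f=sqrt])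
      show "DERIV sqrt (inner (g ys - zs) (g ys - zs) + d0^2) :> inverse (sqrt Q) / 2"
        using DERIV_real_sqrt[OF Q] by (simp add: Q_def)
      show "((\<lambda>y. inner (g y - zs) (g y - zs) + d0^2) has_derivative
        (\<lambda>h. inner (g ys - zs) (J ys *v h) + inner (J ys *v h) (g ys - zs))) (at ys)"
      proof -
        have dg: "((\<lambda>y. g y - zs) has_derivative (\<lambda>h. J ys *v h)) (at ys)"
          using has_derivative_diff[OF deriv[of ys] has_derivative_const[of zs]] by simp
        from has_derivative_add[OF has_derivative_inner[OF dg dg] has_derivative_const[of "d0^2"]]
        show ?thesis by simp
      qed
    qed
  qed (auto intro: derivative_eq_intros)
  define D where "D = (\<lambda>h. - inner v h + c * (inner (ys - x) h + inner h (ys - x))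
        + L * ((inner (g ys - zs) (J ys *v h) + inner (J ys *v h) (g ys - zs)) * (inverse (sqrt Q) / 2)))"
  have D0: "D = (\<lambda>h. 0)"
    unfolding D_def by (rule differential_zero_maxmin[OF ysball open_ball dH]) (use Hmin in blast)
  define w where "w = - v + (2*c) *\<^sub>R (ys - x) + transpose (J ys) *v lam"
  have Dw: "D h = inner w h" for h
  proof -
    have "inner (transpose (J ys) *v lam) h = (L / sqrt Q) * inner (g ys - zs) (J ys *v h)"
      unfolding transpose_inner lam_def by simp
    note tr = this
    have e1: "inner h (ys-x) = inner (ys-x) h" by (rule inner_commute)
    have e2: "inner (J ys *v h) (g ys - zs) = inner (g ys - zs) (J ys *v h)" by (rule inner_commute)
    have "D h = - inner v h + 2*c*inner (ys-x) h + (L / sqrt Q) * inner (g ys - zs) (J ys *v h)"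
    proof -
      have q1: "c * (inner (ys - x) h + inner (ys - x) h) = 2*c*inner (ys-x) h" by simp
      have q2: "L * ((inner (g ys - zs) (J ys *v h) + inner (g ys - zs) (J ys *v h)) * (inverse (sqrt Q) / 2))
         = (L / sqrt Q) * inner (g ys - zs) (J ys *v h)" by (simp add: field_simps)
      show ?thesis unfolding D_def e1 e2 q1 q2 by simp
    qed
    moreover have "inner w h = - inner v h + 2*c*inner (ys-x) h + (L / sqrt Q) * inner (g ys - zs) (J ys *v h)"
      unfolding w_def inner_add_left tr by simp
    ultimately show ?thesis by simp
  qed
  have "inner w w = 0" using Dw[of w] D0 by simp
  then have w0: "w = 0" by simp
  then have vJ: "v - transpose (J ys) *v lam = (2*c) *\<^sub>R (ys - x)"
    unfolding w_def by (simp add: algebra_simps)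
  have "norm (v - transpose (J ys) *v lam) = 2 * c * norm (ys - x)"
    unfolding vJ using c by simp
  also have "\<dots> \<le> 2 * c * s" using ysball c by (simp add: dist_norm norm_minus_commute)
  also have "\<dots> = 4 * \<epsilon>" using s by (simp add: c_def)
  finally have n1: "norm (v - transpose (J ys) *v lam) \<le> 4 * \<epsilon>" .
  have "norm (g ys - zs) \<le> sqrt Q"
    unfolding Q_def norm_eq_sqrt_inner by (rule real_sqrt_le_mono) simp
  then have "norm (g ys - zs) / sqrt Q \<le> 1" using Q by simp
  then have n2: "norm lam \<le> L" unfolding lam_def using L Q
    by (simp add: mult_le_cancel_left1 divide_le_eq)
  have fn: "lam \<in> frechet_normal K zs"
    unfolding lam_def by (rule nearest_frechet[OF zs zsmin]) (use L Q in auto)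
  have "dist (g ys) zs \<le> dist (g ys) (g x)" by (rule zsmin[OF gx])
  then show ?thesis using ysball zs fn n1 n2 by blast
qed


lemma infdist_eq_nearest:
  fixes a :: "'a::heine_borel"
  assumes "closed S" "S \<noteq> {}"
  obtains z where "z \<in> S" "infdist a S = dist a z" "\<And>y. y \<in> S \<Longrightarrow> dist a z \<le> dist a y"
proof -
  obtain z where z: "z \<in> S" and zmin: "\<And>y. y \<in> S \<Longrightarrow> dist a z \<le> dist a y"
    using distance_attains_inf[OF assms] by metis
  have "infdist a S = dist a z"
  proof (rule antisym)
    show "infdist a S \<le> dist a z" by (rule infdist_le[OF z])
    show "dist a z \<le> infdist a S"
      unfolding infdist_notempty[OF assms(2)] by (rule cINF_greatest[OF assms(2) zmin])
  qed
  then show ?thesis using that z zmin by blast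
qed

lemma hyp_from_mscq:
  fixes g :: "real^'n \<Rightarrow> real^'m"
  assumes contg: "\<And>x. continuous (at x) g" and closedK: "closed K" and x: "g x \<in> K"
    and eps: "\<epsilon> > 0"
    and ms: "\<forall>y\<in>cball x s. infdist y (g -` K) \<le> \<kappa>1 * infdist (g y) K"
    and fr: "\<forall>y\<in>g -` K. norm (y - x) < r \<longrightarrow> inner v (y - x) \<le> \<epsilon> * norm (y - x)"
    and sr: "2 * s < r"
  shows "\<forall>y\<in>cball x s. inner v (y - x) \<le> \<epsilon> * norm (y - x) + ((\<epsilon> + norm v)*\<kappa>1) * infdist (g y) K"
proof
  fix y assume y: "y \<in> cball x s"
  have cC: "closed (g -` K)" by (rule continuous_closed_vimage[OF closedK contg])
  have neC: "g -` K \<noteq> {}" using x by auto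
  obtain yt where yt: "yt \<in> g -` K" and ytd: "infdist y (g -` K) = dist y yt"
      and ytmin: "\<And>u. u \<in> g -` K \<Longrightarrow> dist y yt \<le> dist y u"
    using infdist_eq_nearest[OF cC neC] by metis
  have xC: "x \<in> g -` K" using x by simp
  have d1: "norm (y - yt) \<le> norm (y - x)" using ytmin[OF xC] by (simp add: dist_norm)
  have nyx: "norm (y - x) \<le> s" using y by (simp add: dist_norm norm_minus_commute)
  have "norm (yt - x) \<le> norm (y - yt) + norm (y - x)"
    using norm_triangle_ineq4[of "y - x" "y - yt"] by (simp add: algebra_simps)
  also have "\<dots> < r" using d1 nyx sr by linarith
  finally have "inner v (yt - x) \<le> \<epsilon> * norm (yt - x)" using fr yt by blast
  also have "\<dots> \<le> \<epsilon> * (norm (y - yt) + norm (y - x))"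
    using norm_triangle_ineq4[of "y - x" "y - yt"] eps by (intro mult_left_mono) (auto simp: algebra_simps)
  finally have i1: "inner v (yt - x) \<le> \<epsilon> * norm (y - x) + \<epsilon> * norm (y - yt)" by (simp add: algebra_simps)
  have i2: "inner v (y - yt) \<le> norm v * norm (y - yt)"
    using Cauchy_Schwarz_ineq2[of v "y - yt"] by linarith
  have "inner v (y - x) = inner v (yt - x) + inner v (y - yt)" by (simp add: inner_diff_right)
  also have "\<dots> \<le> \<epsilon> * norm (y - x) + (\<epsilon> + norm v) * norm (y - yt)"
    using i1 i2 by (simp add: algebra_simps)
  also have "\<dots> \<le> \<epsilon> * norm (y - x) + (\<epsilon> + norm v) * (\<kappa>1 * infdist (g y) K)"
  proof -
    have "norm (y - yt) \<le> \<kappa>1 * infdist (g y) K" using ms[rule_format, OF y] ytd by (simp add: dist_norm)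
    then show ?thesis using eps by (intro add_left_mono mult_left_mono) auto
  qed
  finally show "inner v (y - x) \<le> \<epsilon> * norm (y - x) + ((\<epsilon> + norm v)*\<kappa>1) * infdist (g y) K"
    by (simp add: mult.assoc)
qed

lemma dir_normal_iff:
  "v \<in> dir_normal S x d \<longleftrightarrow> (\<forall>e>0. \<exists>t dd vv. 0 < t \<and> t < e \<and> norm (dd - d) < e \<and> norm (vv - v) < e
      \<and> vv \<in> frechet_normal S (x + t *\<^sub>R dd))"
proof
  assume "v \<in> dir_normal S x d"
  then obtain t dd vv where t: "\<forall>k. t k > 0" "t \<longlonglongrightarrow> 0" and dd: "dd \<longlonglongrightarrow> d" and vv: "vv \<longlonglongrightarrow> v"
    and fn: "\<forall>k. vv k \<in> frechet_normal S (x + t k *\<^sub>R dd k)" unfolding dir_normal_def by blast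
  show "\<forall>e>0. \<exists>t dd vv. 0 < t \<and> t < e \<and> norm (dd - d) < e \<and> norm (vv - v) < e
      \<and> vv \<in> frechet_normal S (x + t *\<^sub>R dd)"
  proof (intro allI impI)
    fix e :: real assume e: "e > 0"
    have "eventually (\<lambda>k. norm (t k) < e) sequentially" using t(2) e by (simp add: tendsto_iff dist_norm)
    moreover have "eventually (\<lambda>k. dist (dd k) d < e) sequentially" using dd e by (simp add: tendsto_iff)
    moreover have "eventually (\<lambda>k. dist (vv k) v < e) sequentially" using vv e by (simp add: tendsto_iff)
    ultimately have "\<forall>\<^sub>F k in sequentially. norm (t k) < e \<and> dist (dd k) d < e \<and> dist (vv k) v < e"
      by eventually_elim auto
    then obtain k where "norm (t k) < e" "dist (dd k) d < e" "dist (vv k) v < e"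
      unfolding eventually_sequentially by blast
    then show "\<exists>t dd vv. 0 < t \<and> t < e \<and> norm (dd - d) < e \<and> norm (vv - v) < e
      \<and> vv \<in> frechet_normal S (x + t *\<^sub>R dd)"
      using t(1) fn by (intro exI[of _ "t k"] exI[of _ "dd k"] exI[of _ "vv k"]) (auto simp: dist_norm)
  qed
next
  assume H: "\<forall>e>0. \<exists>t dd vv. 0 < t \<and> t < e \<and> norm (dd - d) < e \<and> norm (vv - v) < e
      \<and> vv \<in> frechet_normal S (x + t *\<^sub>R dd)"
  have "\<forall>k::nat. \<exists>p. 0 < fst p \<and> fst p < 1/(real k+1) \<and> norm (fst (snd p) - d) < 1/(real k+1) \<and> norm (snd (snd p) - v) < 1/(real k+1)
      \<and> snd (snd p) \<in> frechet_normal S (x + fst p *\<^sub>R fst (snd p))"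
  proof
    fix k :: nat
    have "1/(real k+1) > 0" by simp
    then obtain t dd vv where "0 < t \<and> t < 1/(real k+1) \<and> norm (dd - d) < 1/(real k+1) \<and> norm (vv - v) < 1/(real k+1)
      \<and> vv \<in> frechet_normal S (x + t *\<^sub>R dd)" using H by blast
    then show "\<exists>p. 0 < fst p \<and> fst p < 1/(real k+1) \<and> norm (fst (snd p) - d) < 1/(real k+1) \<and> norm (snd (snd p) - v) < 1/(real k+1)
      \<and> snd (snd p) \<in> frechet_normal S (x + fst p *\<^sub>R fst (snd p))"
      by (intro exI[of _ "(t,dd,vv)"]) (simp add: add.commute)
  qed
  then obtain p where p: "\<And>k::nat. 0 < fst (p k) \<and> fst (p k) < 1/(real k+1) \<and> norm (fst (snd (p k)) - d) < 1/(real k+1) \<and> norm (snd (snd (p k)) - v) < 1/(real k+1)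
      \<and> snd (snd (p k)) \<in> frechet_normal S (x + fst (p k) *\<^sub>R fst (snd (p k)))" by metis
  have lim: "(\<lambda>k. 1 / (real k + 1)) \<longlonglongrightarrow> 0"
    using LIMSEQ_Suc[OF lim_inverse_n'] by (simp add: add.commute)
  have "(\<lambda>k. fst (p k)) \<longlonglongrightarrow> 0"
    by (rule tendsto_sandwich[OF _ _ tendsto_const lim]) (use p in \<open>auto intro!: always_eventually less_imp_le\<close>)
  moreover have "(\<lambda>k. fst (snd (p k))) \<longlonglongrightarrow> d"
    apply (rule LIM_zero_cancel, rule tendsto_norm_zero_cancel)
    by (rule tendsto_sandwich[OF _ _ tendsto_const lim]) (use p in \<open>auto intro!: always_eventually less_imp_le\<close>)
  moreover have "(\<lambda>k. snd (snd (p k))) \<longlonglongrightarrow> v"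
    apply (rule LIM_zero_cancel, rule tendsto_norm_zero_cancel)
    by (rule tendsto_sandwich[OF _ _ tendsto_const lim]) (use p in \<open>auto intro!: always_eventually less_imp_le\<close>)
  ultimately show "v \<in> dir_normal S x d" unfolding dir_normal_def using p
    by (intro CollectI exI[of _ "\<lambda>k. fst (p k)"] exI[of _ "\<lambda>k. fst (snd (p k))"] exI[of _ "\<lambda>k. snd (snd (p k))"]) auto
qed

lemma dir_normal_closed_seq:
  assumes f: "\<And>j. f j \<in> dir_normal S x d" and l: "f \<longlonglongrightarrow> l"
  shows "l \<in> dir_normal S x d"
  unfolding dir_normal_iff
proof (intro allI impI)
  fix e :: real assume e: "e > 0"
  then have "e/2 > 0" by simp
  then have "eventually (\<lambda>j. dist (f j) l < e/2) sequentially" using l tendsto_iff by blast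
  then obtain j where j: "dist (f j) l < e/2" unfolding eventually_sequentially by blast
  from f[of j] e obtain t dd vv where w: "0 < t" "t < e/2" "norm (dd - d) < e/2" "norm (vv - f j) < e/2"
     "vv \<in> frechet_normal S (x + t *\<^sub>R dd)" unfolding dir_normal_iff by (meson half_gt_zero)
  have "norm (vv - l) \<le> norm (vv - f j) + norm (f j - l)"
    using norm_triangle_ineq[of "vv - f j" "f j - l"] by simp
  then have "norm (vv - l) < e" using w j by (simp add: dist_norm)
  then show "\<exists>t dd vv. 0 < t \<and> t < e \<and> norm (dd - d) < e \<and> norm (vv - l) < e \<and> vv \<in> frechet_normal S (x + t *\<^sub>R dd)"
    using w by (intro exI[of _ t] exI[of _ dd] exI[of _ vv]) auto
qed

lemma tendsto_transpose_mult:
  fixes A :: "nat \<Rightarrow> real^'n^'m" and y :: "nat \<Rightarrow> real^'m"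
  assumes "A \<longlonglongrightarrow> A0" "y \<longlonglongrightarrow> y0"
  shows "(\<lambda>k. transpose (A k) *v y k) \<longlonglongrightarrow> transpose A0 *v y0"
  unfolding transpose_matrix_vector vector_matrix_mult_def
  by (intro vec_tendstoI) (simp, intro tendsto_intros assms)


lemma dir_nbhd_mem:
  fixes w d :: "'a::euclidean_space"
  assumes t: "t > 0" and wd: "norm (w - t *\<^sub>R d) \<le> \<sigma> * t"
    and sd: "d = 0 \<or> \<sigma>*(2+\<rho>) \<le> \<rho>*norm d" and tb: "t*(norm d + \<sigma>) \<le> \<delta>"
    and rho: "\<rho> > 0" and sig: "\<sigma> \<ge> 0"
  shows "w \<in> dir_nbhd \<rho> \<delta> d"
proof -
  define p where "p = w - t *\<^sub>R d"
  have w: "w = t *\<^sub>R d + p" by (simp add: p_def)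
  have np: "norm p \<le> \<sigma> * t" using wd p_def by simp
  have "norm w \<le> t * norm d + norm p" unfolding w using norm_triangle_ineq[of "t *\<^sub>R d" p] t by simp
  also have "\<dots> \<le> t * (norm d + \<sigma>)" using np by (simp add: algebra_simps)
  finally have n1: "norm w \<le> \<delta>" using tb by simp
  have n2: "norm (norm d *\<^sub>R w - norm w *\<^sub>R d) \<le> \<rho> * norm w * norm d"
  proof (cases "d = 0")
    case True then show ?thesis by simp
  next
    case False
    then have s2: "\<sigma>*(2+\<rho>) \<le> \<rho>*norm d" using sd by simp
    have eq: "norm d *\<^sub>R w - norm w *\<^sub>R d = (t * norm d - norm w) *\<^sub>R d + norm d *\<^sub>R p"
      unfolding w by (simp add: algebra_simps)
    have ab: "\<bar>t * norm d - norm w\<bar> \<le> norm p"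
    proof -
      have "norm w \<le> t * norm d + norm p" unfolding w using norm_triangle_ineq[of "t *\<^sub>R d" p] t by simp
      moreover have "t * norm d \<le> norm w + norm p"
        using norm_triangle_ineq4[of w p] t by (simp add: w)
      ultimately show ?thesis by linarith
    qed
    have "norm (norm d *\<^sub>R w - norm w *\<^sub>R d) \<le> \<bar>t * norm d - norm w\<bar> * norm d + norm d * norm p"
      unfolding eq using norm_triangle_ineq[of "(t * norm d - norm w) *\<^sub>R d" "norm d *\<^sub>R p"] by simp
    also have "\<dots> = \<bar>t * norm d - norm w\<bar> * norm d + norm p * norm d" by (simp add: mult.commute)
    also have "\<dots> \<le> norm p * norm d + norm p * norm d"
    proof -
      have "\<bar>t * norm d - norm w\<bar> * norm d \<le> norm p * norm d" by (rule mult_right_mono[OF ab]) simp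
      then show ?thesis by linarith
    qed
    also have "\<dots> = 2 * norm p * norm d" by simp
    also have "\<dots> \<le> 2 * (\<sigma> * t) * norm d" using np by (simp add: mult_right_mono)
    also have "\<dots> \<le> \<rho> * (t * norm d - \<sigma> * t) * norm d"
    proof -
      have "2 * \<sigma> \<le> \<rho> * (norm d - \<sigma>)" using s2 by (simp add: algebra_simps)
      then have "2 * \<sigma> * t \<le> \<rho> * (norm d - \<sigma>) * t" using t by (simp add: mult_right_mono)
      then show ?thesis by (intro mult_right_mono) (auto simp: algebra_simps)
    qed
    also have "\<dots> \<le> \<rho> * norm w * norm d"
    proof -
      have "t * norm d - \<sigma> * t \<le> norm w" using ab np by linarith
      then show ?thesis using rho by (intro mult_right_mono mult_left_mono) auto
    qed
    finally show ?thesis .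
  qed
  show ?thesis unfolding dir_nbhd_def using n1 n2 by simp
qed

lemma dir_deriv_seq:
  fixes g :: "real^'n \<Rightarrow> real^'m"
  assumes der: "(g has_derivative (\<lambda>h. A *v h)) (at x)" and t: "\<forall>k. t k > 0" "t \<longlonglongrightarrow> 0"
    and e: "e \<longlonglongrightarrow> d"
  shows "(\<lambda>k. (g (x + t k *\<^sub>R e k) - g x) /\<^sub>R t k) \<longlonglongrightarrow> A *v d"
proof -
  obtain B where B: "B > 0" "\<And>k. norm (e k) \<le> B"
    using convergent_imp_bounded[OF e] unfolding bounded_pos by auto
  have R: "(\<lambda>k. (g (x + t k *\<^sub>R e k) - g x) /\<^sub>R t k - A *v e k) \<longlonglongrightarrow> 0"
  proof (rule LIMSEQ_I)
    fix r :: real assume r: "r > 0"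
    obtain \<delta> where \<delta>: "\<delta> > 0" "\<And>y. norm (y - x) < \<delta> \<Longrightarrow> norm (g y - g x - A *v (y - x)) \<le> (r/(2*B)) * norm (y - x)"
      using der[unfolded has_derivative_at_alt] r B by (metis divide_pos_pos mult_pos_pos zero_less_numeral)
    have "eventually (\<lambda>k. norm (t k) < \<delta>/B) sequentially"
      using t(2) \<delta> B by (simp add: tendsto_iff dist_norm)
    then obtain N where N: "\<And>k. k \<ge> N \<Longrightarrow> norm (t k) < \<delta>/B" unfolding eventually_sequentially by blast
    show "\<exists>N. \<forall>k\<ge>N. norm ((g (x + t k *\<^sub>R e k) - g x) /\<^sub>R t k - A *v e k - 0) < r"
    proof (intro exI allI impI)
      fix k assume k: "k \<ge> N"
      have tk: "t k > 0" using t by simp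
      have "norm (t k *\<^sub>R e k) = t k * norm (e k)" using tk by simp
      also have "\<dots> \<le> t k * B" using B tk by (simp add: mult_left_mono)
      also have "\<dots> < \<delta>" using N[OF k] tk B by (simp add: field_simps)
      finally have "norm ((x + t k *\<^sub>R e k) - x) < \<delta>" by simp
      from \<delta>(2)[OF this] have "norm (g (x + t k *\<^sub>R e k) - g x - A *v (t k *\<^sub>R e k)) \<le> (r/(2*B)) * (t k * norm (e k))"
        using tk by simp
      moreover have "(g (x + t k *\<^sub>R e k) - g x) /\<^sub>R t k - A *v e k = (g (x + t k *\<^sub>R e k) - g x - A *v (t k *\<^sub>R e k)) /\<^sub>R t k"
        using tk by (simp add: matrix_vector_mult_scaleR algebra_simps)
      ultimately have "norm ((g (x + t k *\<^sub>R e k) - g x) /\<^sub>R t k - A *v e k) \<le> ((r/(2*B)) * (t k * norm (e k))) / t k"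
        using tk by (simp only: norm_scaleR abs_inverse abs_of_pos[OF tk] divide_inverse mult.commute mult_left_mono inverse_nonnegative_iff_nonnegative less_imp_le)
      also have "\<dots> = (r/(2*B)) * norm (e k)" using tk by simp
      finally have "norm ((g (x + t k *\<^sub>R e k) - g x) /\<^sub>R t k - A *v e k) \<le> (r/(2*B)) * norm (e k)" .
      also have "\<dots> \<le> (r/(2*B)) * B" using B r by (intro mult_left_mono) auto
      also have "\<dots> < r" using B r by simp
      finally show "norm ((g (x + t k *\<^sub>R e k) - g x) /\<^sub>R t k - A *v e k - 0) < r" by simp
    qed
  qed
  have "(\<lambda>k. A *v e k) \<longlonglongrightarrow> A *v d"
    using bounded_linear.tendsto[OF matrix_vector_mul_bounded_linear e] .
  from tendsto_add[OF R this] show ?thesis by simp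
qed


lemma main_triple:
  fixes g :: "real^'n \<Rightarrow> real^'m"
    and J :: "real^'n \<Rightarrow> real^'n^'m"
    and K :: "(real^'m) set"
    and xbar d :: "real^'n"
  assumes deriv: "\<And>x. (g has_derivative (\<lambda>h. J x *v h)) (at x)"
    and contJ: "continuous_on UNIV J"
    and closedK: "closed K"
    and xbar: "xbar \<in> g -` K"
    and tr: "mscq_triple g K xbar d \<rho> \<delta> \<kappa>1"
    and vin: "v \<in> dir_normal (g -` K) xbar d"
  shows "\<exists>lam. lam \<in> dir_normal K (g xbar) (J xbar *v d) \<and> norm lam \<le> \<kappa>1 * norm v
            \<and> v = transpose (J xbar) *v lam"
proof -
  have rho: "\<rho> > 0" and dl: "\<delta> > 0" and k1: "\<kappa>1 > 0"
    and ms: "\<forall>x \<in> (\<lambda>w. xbar + w) ` dir_nbhd \<rho> \<delta> d. infdist x (g -` K) \<le> \<kappa>1 * infdist (g x) K"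
    using tr unfolding mscq_triple_def by auto
  obtain t0 dd0 vv0 where t0: "\<forall>k. t0 k > 0" "t0 \<longlonglongrightarrow> 0" and dd0: "dd0 \<longlonglongrightarrow> d" and vv0: "vv0 \<longlonglongrightarrow> v"
    and fn0: "\<forall>k. vv0 k \<in> frechet_normal (g -` K) (xbar + t0 k *\<^sub>R dd0 k)"
    using vin unfolding dir_normal_def by blast
  define \<sigma> where "\<sigma> = (if d = 0 then 1 else \<rho> * norm d / (2+\<rho>))"
  have sig: "\<sigma> > 0" using rho by (simp add: \<sigma>_def)
  have sigd: "d = 0 \<or> \<sigma>*(2+\<rho>) \<le> \<rho>*norm d" using rho by (simp add: \<sigma>_def)
  have "\<sigma>/2 > 0" using sig by simp
  then have ev1: "eventually (\<lambda>k. dist (dd0 k) d < \<sigma>/2) sequentially" using dd0 tendsto_iff by blast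
  have "(\<lambda>k. t0 k * (norm d + \<sigma>)) \<longlonglongrightarrow> 0 * (norm d + \<sigma>)" by (intro tendsto_intros t0)
  then have "eventually (\<lambda>k. dist (t0 k * (norm d + \<sigma>)) 0 < \<delta>) sequentially" using dl tendsto_iff by force
  with ev1 have "eventually (\<lambda>k. dist (dd0 k) d < \<sigma>/2 \<and> dist (t0 k * (norm d + \<sigma>)) 0 < \<delta>) sequentially"
    by eventually_elim auto
  then obtain N where N: "\<And>k. k \<ge> N \<Longrightarrow> dist (dd0 k) d < \<sigma>/2 \<and> dist (t0 k * (norm d + \<sigma>)) 0 < \<delta>"
    unfolding eventually_sequentially by blast
  define t where "t k = t0 (k + N)" for k
  define dd where "dd k = dd0 (k + N)" for k
  define vv where "vv k = vv0 (k + N)" for k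
  have tpos: "\<And>k. t k > 0" using t0 by (simp add: t_def)
  have tl: "t \<longlonglongrightarrow> 0" unfolding t_def using LIMSEQ_ignore_initial_segment[OF t0(2)] .
  have ddl: "dd \<longlonglongrightarrow> d" unfolding dd_def using LIMSEQ_ignore_initial_segment[OF dd0] .
  have vvl: "vv \<longlonglongrightarrow> v" unfolding vv_def using LIMSEQ_ignore_initial_segment[OF vv0] .
  have fn: "\<And>k. vv k \<in> frechet_normal (g -` K) (xbar + t k *\<^sub>R dd k)" using fn0 by (simp add: t_def dd_def vv_def)
  have ddc: "\<And>k. norm (dd k - d) < \<sigma>/2" using N by (simp add: dd_def dist_norm)
  have tc: "\<And>k. t k * (norm d + \<sigma>) < \<delta>"
  proof -
    fix k
    have "dist (t k * (norm d + \<sigma>)) 0 < \<delta>" using N[of "k+N"] by (simp add: t_def)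
    moreover have "t k * (norm d + \<sigma>) \<ge> 0" using tpos[of k] sig by simp
    ultimately show "t k * (norm d + \<sigma>) < \<delta>" by (simp add: dist_real_def)
  qed
  have contg: "\<And>x. continuous (at x) g" using has_derivative_continuous[OF deriv] .
  have step: "\<forall>k. \<exists>y z lam. norm (y - (xbar + t k *\<^sub>R dd k)) \<le> t k/(real k+1) \<and> z \<in> K
     \<and> dist (g y) z \<le> dist (g y) (g (xbar + t k *\<^sub>R dd k)) \<and> lam \<in> frechet_normal K z
     \<and> norm lam \<le> (1/(real k+1) + norm (vv k))*\<kappa>1 \<and> norm (vv k - transpose (J y) *v lam) \<le> 4*(1/(real k+1))"
  proof
    fix k
    define xk where "xk = xbar + t k *\<^sub>R dd k"
    define \<epsilon> where "\<epsilon> = 1/(real k+1)"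
    have eps: "\<epsilon> > 0" by (simp add: \<epsilon>_def)
    have xkC: "xk \<in> g -` K" using fn[of k] unfolding xk_def frechet_normal_def by (auto split: if_splits)
    have "\<forall>e>0. \<exists>r>0. \<forall>y\<in>g -` K. norm (y - xk) < r \<longrightarrow> inner (vv k) (y - xk) \<le> e * norm (y - xk)"
      using fn[of k] xkC unfolding xk_def frechet_normal_def by simp
    then obtain r where r: "r > 0" and fr: "\<forall>y\<in>g -` K. norm (y - xk) < r \<longrightarrow> inner (vv k) (y - xk) \<le> \<epsilon> * norm (y - xk)"
      using eps by blast
    define s where "s = min (r/3) (min (\<sigma> * t k/2) (t k/(real k+1)))"
    have spos: "s > 0" using r sig tpos[of k] by (simp add: s_def)
    have sr: "2 * s < r" using r by (simp add: s_def)
    have s1: "s \<le> \<sigma> * t k/2" unfolding s_def by (rule order_trans[OF min.cobounded2 min.cobounded1])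
    have s2: "s \<le> t k/(real k+1)" unfolding s_def by (rule order_trans[OF min.cobounded2 min.cobounded2])
    have msk: "\<forall>y\<in>cball xk s. infdist y (g -` K) \<le> \<kappa>1 * infdist (g y) K"
    proof
      fix y assume y: "y \<in> cball xk s"
      have "y - xbar \<in> dir_nbhd \<rho> \<delta> d"
      proof (rule dir_nbhd_mem[where t="t k" and \<sigma>=\<sigma>])
        have eq: "y - xbar - t k *\<^sub>R d = (y - xk) + t k *\<^sub>R (dd k - d)"
          by (simp add: xk_def algebra_simps)
        have "norm (y - xbar - t k *\<^sub>R d) \<le> norm (y - xk) + t k * norm (dd k - d)"
          unfolding eq using norm_triangle_ineq[of "y - xk" "t k *\<^sub>R (dd k - d)"] tpos[of k] by simp
        also have "\<dots> \<le> \<sigma> * t k/2 + t k * (\<sigma>/2)"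
        proof (rule add_mono)
          show "norm (y - xk) \<le> \<sigma> * t k/2" using y s1 by (simp add: dist_norm norm_minus_commute)
          show "t k * norm (dd k - d) \<le> t k * (\<sigma>/2)" using ddc[of k] tpos[of k] by (intro mult_left_mono) auto
        qed
        also have "\<dots> = \<sigma> * t k" by simp
        finally show "norm (y - xbar - t k *\<^sub>R d) \<le> \<sigma> * t k" .
        show "0 < t k" by (rule tpos)
        show "d = 0 \<or> \<sigma> * (2 + \<rho>) \<le> \<rho> * norm d" by (rule sigd)
        show "t k * (norm d + \<sigma>) \<le> \<delta>" using tc[of k] by simp
        show "0 < \<rho>" by (rule rho)
        show "0 \<le> \<sigma>" using sig by simp
      qed
      then have "y \<in> (\<lambda>w. xbar + w) ` dir_nbhd \<rho> \<delta> d" by (rule rev_image_eqI) simp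
      then show "infdist y (g -` K) \<le> \<kappa>1 * infdist (g y) K" using ms by blast
    qed
    have gxk: "g xk \<in> K" using xkC by simp
    have H: "\<forall>y\<in>cball xk s. inner (vv k) (y - xk) \<le> \<epsilon> * norm (y - xk) + ((\<epsilon> + norm (vv k))*\<kappa>1) * infdist (g y) K"
      by (rule hyp_from_mscq[OF contg closedK gxk eps msk fr sr])
    have Lpos: "(\<epsilon> + norm (vv k))*\<kappa>1 > 0" using eps k1 by (simp add: add_pos_nonneg)
    obtain y z lam where yzl: "y \<in> ball xk s" "z \<in> K" "dist (g y) z \<le> dist (g y) (g xk)" "lam \<in> frechet_normal K z"
       "norm lam \<le> (\<epsilon> + norm (vv k))*\<kappa>1" "norm (vv k - transpose (J y) *v lam) \<le> 4*\<epsilon>"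
      using core[OF deriv closedK gxk spos eps Lpos H] by blast
    have "norm (y - xk) \<le> t k/(real k+1)" using yzl(1) s2 by (simp add: dist_norm norm_minus_commute)
    then show "\<exists>y z lam. norm (y - (xbar + t k *\<^sub>R dd k)) \<le> t k/(real k+1) \<and> z \<in> K
     \<and> dist (g y) z \<le> dist (g y) (g (xbar + t k *\<^sub>R dd k)) \<and> lam \<in> frechet_normal K z
     \<and> norm lam \<le> (1/(real k+1) + norm (vv k))*\<kappa>1 \<and> norm (vv k - transpose (J y) *v lam) \<le> 4*(1/(real k+1))"
      using yzl unfolding xk_def \<epsilon>_def by blast
  qed
  from choice[OF step] obtain Y where Y: "\<forall>k. \<exists>z lam. norm (Y k - (xbar + t k *\<^sub>R dd k)) \<le> t k/(real k+1) \<and> z \<in> K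
     \<and> dist (g (Y k)) z \<le> dist (g (Y k)) (g (xbar + t k *\<^sub>R dd k)) \<and> lam \<in> frechet_normal K z
     \<and> norm lam \<le> (1/(real k+1) + norm (vv k))*\<kappa>1 \<and> norm (vv k - transpose (J (Y k)) *v lam) \<le> 4*(1/(real k+1))"
    ..
  from choice[OF Y] obtain Z where Z: "\<forall>k. \<exists>lam. norm (Y k - (xbar + t k *\<^sub>R dd k)) \<le> t k/(real k+1) \<and> Z k \<in> K
     \<and> dist (g (Y k)) (Z k) \<le> dist (g (Y k)) (g (xbar + t k *\<^sub>R dd k)) \<and> lam \<in> frechet_normal K (Z k)
     \<and> norm lam \<le> (1/(real k+1) + norm (vv k))*\<kappa>1 \<and> norm (vv k - transpose (J (Y k)) *v lam) \<le> 4*(1/(real k+1))"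
    ..
  from choice[OF Z] obtain LAM where P0: "\<forall>k. norm (Y k - (xbar + t k *\<^sub>R dd k)) \<le> t k/(real k+1) \<and> Z k \<in> K
     \<and> dist (g (Y k)) (Z k) \<le> dist (g (Y k)) (g (xbar + t k *\<^sub>R dd k)) \<and> LAM k \<in> frechet_normal K (Z k)
     \<and> norm (LAM k) \<le> (1/(real k+1) + norm (vv k))*\<kappa>1 \<and> norm (vv k - transpose (J (Y k)) *v LAM k) \<le> 4*(1/(real k+1))"
    ..
  note P = P0[rule_format]
  have lim: "(\<lambda>k. 1 / (real k + 1)) \<longlonglongrightarrow> 0"
    using LIMSEQ_Suc[OF lim_inverse_n'] by (simp add: add.commute)
  define e where "e k = (Y k - xbar) /\<^sub>R t k" for k
  have Ye: "Y k = xbar + t k *\<^sub>R e k" for k using tpos[of k] by (simp add: e_def)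
  have ed: "\<And>k. norm (e k - dd k) \<le> 1/(real k+1)"
  proof -
    fix k
    have "e k - dd k = (Y k - (xbar + t k *\<^sub>R dd k)) /\<^sub>R t k" using tpos[of k] by (simp add: e_def algebra_simps)
    then have "norm (e k - dd k) = norm (Y k - (xbar + t k *\<^sub>R dd k)) / t k" using tpos[of k] by (simp add: divide_inverse_commute)
    also have "\<dots> \<le> (t k/(real k+1)) / t k" using P[of k] tpos[of k] by (intro divide_right_mono) auto
    also have "\<dots> = 1/(real k+1)" using tpos[of k] by simp
    finally show "norm (e k - dd k) \<le> 1/(real k+1)" .
  qed
  have "(\<lambda>k. e k - dd k) \<longlonglongrightarrow> 0"
    apply (rule tendsto_norm_zero_cancel)
    by (rule tendsto_sandwich[OF _ _ tendsto_const lim]) (use ed in \<open>auto intro!: always_eventually\<close>)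
  from tendsto_add[OF this ddl] have el: "e \<longlonglongrightarrow> d" by simp
  have E1: "(\<lambda>k. (g (xbar + t k *\<^sub>R e k) - g xbar) /\<^sub>R t k) \<longlonglongrightarrow> J xbar *v d"
    by (rule dir_deriv_seq[OF deriv _ tl el]) (use tpos in auto)
  have E2: "(\<lambda>k. (g (xbar + t k *\<^sub>R dd k) - g xbar) /\<^sub>R t k) \<longlonglongrightarrow> J xbar *v d"
    by (rule dir_deriv_seq[OF deriv _ tl ddl]) (use tpos in auto)
  define dz where "dz k = (Z k - g xbar) /\<^sub>R t k" for k
  have dzb: "\<And>k. norm (dz k - (g (xbar + t k *\<^sub>R e k) - g xbar) /\<^sub>R t k)
      \<le> norm ((g (xbar + t k *\<^sub>R e k) - g xbar) /\<^sub>R t k - (g (xbar + t k *\<^sub>R dd k) - g xbar) /\<^sub>R t k)"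
  proof -
    fix k
    have a: "dz k - (g (xbar + t k *\<^sub>R e k) - g xbar) /\<^sub>R t k = (Z k - g (Y k)) /\<^sub>R t k"
      unfolding dz_def Ye by (simp add: algebra_simps)
    have b: "(g (xbar + t k *\<^sub>R e k) - g xbar) /\<^sub>R t k - (g (xbar + t k *\<^sub>R dd k) - g xbar) /\<^sub>R t k
        = (g (Y k) - g (xbar + t k *\<^sub>R dd k)) /\<^sub>R t k"
      unfolding Ye by (simp add: algebra_simps)
    have "norm (Z k - g (Y k)) \<le> norm (g (Y k) - g (xbar + t k *\<^sub>R dd k))"
      using P[of k] by (simp add: dist_norm norm_minus_commute)
    then show "norm (dz k - (g (xbar + t k *\<^sub>R e k) - g xbar) /\<^sub>R t k)
      \<le> norm ((g (xbar + t k *\<^sub>R e k) - g xbar) /\<^sub>R t k - (g (xbar + t k *\<^sub>R dd k) - g xbar) /\<^sub>R t k)"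
      unfolding a b using tpos[of k] by (simp add: divide_right_mono)
  qed
  define F1 where "F1 k = (g (xbar + t k *\<^sub>R e k) - g xbar) /\<^sub>R t k" for k
  define F2 where "F2 k = (g (xbar + t k *\<^sub>R dd k) - g xbar) /\<^sub>R t k" for k
  have E1': "F1 \<longlonglongrightarrow> J xbar *v d" using E1 unfolding F1_def .
  have E2': "F2 \<longlonglongrightarrow> J xbar *v d" using E2 unfolding F2_def .
  have dzb': "norm (dz k - F1 k) \<le> norm (F1 k - F2 k)" for k using dzb[of k] unfolding F1_def F2_def .
  have "(\<lambda>k. F1 k - F2 k) \<longlonglongrightarrow> J xbar *v d - J xbar *v d" by (rule tendsto_diff[OF E1' E2'])
  then have "(\<lambda>k. F1 k - F2 k) \<longlonglongrightarrow> 0" by (simp only: diff_self)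
  then have nF: "(\<lambda>k. norm (F1 k - F2 k)) \<longlonglongrightarrow> 0" by (rule tendsto_norm_zero)
  have "(\<lambda>k. dz k - F1 k) \<longlonglongrightarrow> 0"
    apply (rule tendsto_norm_zero_cancel)
    by (rule tendsto_sandwich[OF _ _ tendsto_const nF]) (use dzb' in \<open>auto intro!: always_eventually\<close>)
  from tendsto_add[OF this E1'] have dzl: "dz \<longlonglongrightarrow> J xbar *v d" by simp
  have YY: "Y = (\<lambda>k. xbar + t k *\<^sub>R e k)" using Ye by blast
  have Yl: "Y \<longlonglongrightarrow> xbar"
    unfolding YY using tendsto_add[OF tendsto_const[of xbar] tendsto_scaleR[OF tl el]] by simp
  have "isCont J xbar" using contJ by (simp add: continuous_on_eq_continuous_at)
  from isCont_tendsto_compose[OF this Yl] have JYl: "(\<lambda>k. J (Y k)) \<longlonglongrightarrow> J xbar" .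
  obtain B where B: "\<And>k. norm (vv k) \<le> B"
    using convergent_imp_bounded[OF vvl] unfolding bounded_iff by auto
  have "bounded (range LAM)"
  proof (rule boundedI)
    fix u assume "u \<in> range LAM"
    then obtain k where u: "u = LAM k" by auto
    have "norm (LAM k) \<le> (1/(real k+1) + norm (vv k))*\<kappa>1" using P[of k] by blast
    also have "\<dots> \<le> (1 + B) * \<kappa>1"
    proof -
      have "1/(real k+1) \<le> 1" by simp
      then show ?thesis using B[of k] k1 by (intro mult_right_mono add_mono) auto
    qed
    finally show "norm u \<le> (1 + B) * \<kappa>1" using u by simp
  qed
  then obtain lam rr where rr: "strict_mono (rr::nat\<Rightarrow>nat)" and laml: "(LAM \<circ> rr) \<longlonglongrightarrow> lam"
    using bounded_imp_convergent_subsequence by blast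
  have a1: "\<forall>k. 0 < (t \<circ> rr) k" using tpos by simp
  have a2: "(t \<circ> rr) \<longlonglongrightarrow> 0" by (rule LIMSEQ_subseq_LIMSEQ[OF tl rr])
  have a3: "(dz \<circ> rr) \<longlonglongrightarrow> J xbar *v d" by (rule LIMSEQ_subseq_LIMSEQ[OF dzl rr])
  have a4: "\<forall>k. (LAM \<circ> rr) k \<in> frechet_normal K (g xbar + (t \<circ> rr) k *\<^sub>R (dz \<circ> rr) k)"
  proof
    fix k
    have "g xbar + (t \<circ> rr) k *\<^sub>R (dz \<circ> rr) k = Z (rr k)" using tpos[of "rr k"] by (simp add: dz_def)
    then show "(LAM \<circ> rr) k \<in> frechet_normal K (g xbar + (t \<circ> rr) k *\<^sub>R (dz \<circ> rr) k)"
      using P[of "rr k"] by simp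
  qed
  have c1: "lam \<in> dir_normal K (g xbar) (J xbar *v d)"
    unfolding dir_normal_def using a1 a2 a3 laml a4 by blast
  have c2: "norm lam \<le> \<kappa>1 * norm v"
  proof (rule LIMSEQ_le)
    show "(\<lambda>k. norm ((LAM \<circ> rr) k)) \<longlonglongrightarrow> norm lam" by (intro tendsto_intros laml)
    have "(\<lambda>k. (1/(real (rr k)+1) + norm (vv (rr k)))*\<kappa>1) \<longlonglongrightarrow> (0 + norm v) * \<kappa>1"
      using LIMSEQ_subseq_LIMSEQ[OF lim rr] LIMSEQ_subseq_LIMSEQ[OF vvl rr]
      by (intro tendsto_intros) (auto simp: o_def)
    then show "(\<lambda>k. (1/(real (rr k)+1) + norm (vv (rr k)))*\<kappa>1) \<longlonglongrightarrow> \<kappa>1 * norm v" by (simp add: mult.commute)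
    show "\<exists>N. \<forall>n\<ge>N. norm ((LAM \<circ> rr) n) \<le> (1/(real (rr n)+1) + norm (vv (rr n)))*\<kappa>1"
      using P by auto
  qed
  have l1: "(\<lambda>k. vv (rr k) - transpose (J (Y (rr k))) *v LAM (rr k)) \<longlonglongrightarrow> 0"
  proof -
    have lim4: "(\<lambda>k. 4*(1/(real (rr k)+1))) \<longlonglongrightarrow> 4 * 0"
      using LIMSEQ_subseq_LIMSEQ[OF lim rr] by (intro tendsto_intros) (auto simp: o_def)
    show ?thesis
      apply (rule tendsto_norm_zero_cancel)
      by (rule tendsto_sandwich[OF _ _ tendsto_const lim4[simplified]]) (use P in \<open>auto intro!: always_eventually\<close>)
  qed
  have l2: "(\<lambda>k. vv (rr k) - transpose (J (Y (rr k))) *v LAM (rr k)) \<longlonglongrightarrow> v - transpose (J xbar) *v lam"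
  proof (rule tendsto_diff)
    show "(\<lambda>k. vv (rr k)) \<longlonglongrightarrow> v" using LIMSEQ_subseq_LIMSEQ[OF vvl rr] by (simp add: o_def)
    have a: "(\<lambda>k. J (Y (rr k))) \<longlonglongrightarrow> J xbar" using LIMSEQ_subseq_LIMSEQ[OF JYl rr] by (simp add: o_def)
    have b: "(\<lambda>k. LAM (rr k)) \<longlonglongrightarrow> lam" using laml by (simp add: o_def)
    show "(\<lambda>k. transpose (J (Y (rr k))) *v LAM (rr k)) \<longlonglongrightarrow> transpose (J xbar) *v lam"
      by (rule tendsto_transpose_mult[OF a b])
  qed
  have "v - transpose (J xbar) *v lam = 0" using LIMSEQ_unique[OF l2 l1] .
  then have c3: "v = transpose (J xbar) *v lam" by simp
  show ?thesis using c1 c2 c3 by blast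
qed


theorem lemma2p6:
  fixes g :: "real^'n \<Rightarrow> real^'m"
    and J :: "real^'n \<Rightarrow> real^'n^'m"
    and K :: "(real^'m) set"
    and xbar d :: "real^'n"
    and \<kappa> :: real
  assumes deriv: "\<And>x. (g has_derivative (\<lambda>h. J x *v h)) (at x)"
    and contJ: "continuous_on UNIV J"
    and closedK: "closed K"
    and xbar: "xbar \<in> g -` K"
    and mscq: "mscq_dir g K xbar d"
    and kappa: "\<kappa> = mscq_modulus g K xbar d"
  shows "dir_normal (g -` K) xbar d \<subseteq>
     {v. \<exists>lam. lam \<in> dir_normal K (g xbar) (J xbar *v d) \<and> norm lam \<le> \<kappa> * norm v
            \<and> v = transpose (J xbar) *v lam}"
proof
  fix v assume vin: "v \<in> dir_normal (g -` K) xbar d"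
  define S where "S = {\<kappa>. \<exists>\<rho> \<delta>. mscq_triple g K xbar d \<rho> \<delta> \<kappa>}"
  have Sne: "S \<noteq> {}" using mscq unfolding mscq_dir_def S_def by blast
  have kS: "\<kappa> = Inf S" unfolding kappa mscq_modulus_def S_def ..
  have each: "\<forall>j::nat. \<exists>lam. lam \<in> dir_normal K (g xbar) (J xbar *v d) \<and> norm lam \<le> (\<kappa> + 1/(real j+1)) * norm v
            \<and> v = transpose (J xbar) *v lam"
  proof
    fix j :: nat
    have "Inf S < \<kappa> + 1/(real j+1)" using kS by simp
    then obtain k1 where k1: "k1 \<in> S" "k1 < \<kappa> + 1/(real j+1)" using cInf_lessD[OF Sne] by blast
    then obtain \<rho> \<delta> where tr: "mscq_triple g K xbar d \<rho> \<delta> k1" unfolding S_def by blast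
    obtain lam where lam: "lam \<in> dir_normal K (g xbar) (J xbar *v d)" "norm lam \<le> k1 * norm v"
        "v = transpose (J xbar) *v lam"
      using main_triple[OF deriv contJ closedK xbar tr vin] by blast
    have "k1 * norm v \<le> (\<kappa> + 1/(real j+1)) * norm v" using k1 by (intro mult_right_mono) auto
    then show "\<exists>lam. lam \<in> dir_normal K (g xbar) (J xbar *v d) \<and> norm lam \<le> (\<kappa> + 1/(real j+1)) * norm v
            \<and> v = transpose (J xbar) *v lam" using lam by force
  qed
  from choice[OF each] obtain LJ where LJ0: "\<forall>j. LJ j \<in> dir_normal K (g xbar) (J xbar *v d) \<and> norm (LJ j) \<le> (\<kappa> + 1/(real j+1)) * norm v
            \<and> v = transpose (J xbar) *v LJ j" ..
  note LJ = LJ0[rule_format]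
  have k0: "\<kappa> \<ge> 0"
  proof -
    have "\<forall>x\<in>S. 0 \<le> x" unfolding S_def mscq_triple_def by auto
    then show ?thesis unfolding kS by (intro cInf_greatest[OF Sne]) auto
  qed
  have "bounded (range LJ)"
  proof (rule boundedI)
    fix u assume "u \<in> range LJ"
    then obtain j where u: "u = LJ j" by auto
    have "norm (LJ j) \<le> (\<kappa> + 1/(real j+1)) * norm v" using LJ[of j] by blast
    also have "\<dots> \<le> (\<kappa> + 1) * norm v"
    proof -
      have "1/(real j+1) \<le> 1" by simp
      then show ?thesis by (intro mult_right_mono add_mono) auto
    qed
    finally show "norm u \<le> (\<kappa> + 1) * norm v" using u by simp
  qed
  then obtain lam rr where rr: "strict_mono (rr::nat\<Rightarrow>nat)" and laml: "(LJ \<circ> rr) \<longlonglongrightarrow> lam"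
    using bounded_imp_convergent_subsequence by blast
  have c1: "lam \<in> dir_normal K (g xbar) (J xbar *v d)"
    by (rule dir_normal_closed_seq[OF _ laml]) (use LJ in simp)
  have lim: "(\<lambda>k. 1 / (real k + 1)) \<longlonglongrightarrow> 0"
    using LIMSEQ_Suc[OF lim_inverse_n'] by (simp add: add.commute)
  have c2: "norm lam \<le> \<kappa> * norm v"
  proof (rule LIMSEQ_le)
    show "(\<lambda>k. norm ((LJ \<circ> rr) k)) \<longlonglongrightarrow> norm lam" by (intro tendsto_intros laml)
    have "(\<lambda>k. (\<kappa> + 1/(real (rr k)+1)) * norm v) \<longlonglongrightarrow> (\<kappa> + 0) * norm v"
      using LIMSEQ_subseq_LIMSEQ[OF lim rr] by (intro tendsto_intros) (auto simp: o_def)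
    then show "(\<lambda>k. (\<kappa> + 1/(real (rr k)+1)) * norm v) \<longlonglongrightarrow> \<kappa> * norm v" by simp
    show "\<exists>N. \<forall>n\<ge>N. norm ((LJ \<circ> rr) n) \<le> (\<kappa> + 1/(real (rr n)+1)) * norm v"
      using LJ by auto
  qed
  have "(\<lambda>k. transpose (J xbar) *v (LJ \<circ> rr) k) \<longlonglongrightarrow> transpose (J xbar) *v lam"
    by (rule tendsto_transpose_mult[OF tendsto_const laml])
  moreover have "(\<lambda>k. transpose (J xbar) *v (LJ \<circ> rr) k) = (\<lambda>k. v)"
    using LJ by (simp only: o_def)
  ultimately have "(\<lambda>k. v) \<longlonglongrightarrow> transpose (J xbar) *v lam" by simp
  then have c3: "v = transpose (J xbar) *v lam" using LIMSEQ_unique[OF tendsto_const] by blast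
  show "v \<in> {v. \<exists>lam. lam \<in> dir_normal K (g xbar) (J xbar *v d) \<and> norm lam \<le> \<kappa> * norm v
            \<and> v = transpose (J xbar) *v lam}" using c1 c2 c3 by blast
qed

end
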